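(* For every $\sigma\in\widetilde{S}_{AB}$, $\sigma=\inf^{\widetilde{S}_{AB}}\underline{\sigma}$, where $\underline{\sigma}:=\widetilde{S}^{pure}_{AB}\cap\{\sigma'\in\widetilde{S}_{AB}\;\vert\;\sigma\sqsubseteq_{\widetilde{S}_{AB}}\sigma'\}$, and $\widetilde{S}^{pure}_{AB}=\{\sigma_A\widetilde{\otimes}\sigma_B\;\vert\;\sigma_A\in\mathfrak{S}^{pure}_A,\sigma_B\in\mathfrak{S}^{pure}_B\}=Max(\widetilde{S}_{AB})$ is the set of completely meet-irreducible elements of $\widetilde{S}_{AB}$.
   Context: $(\mathfrak{S}_A,\mathfrak{E}_A,\epsilon^{\mathfrak{S}_A})$, $(\mathfrak{S}_B,\mathfrak{E}_B,\epsilon^{\mathfrak{S}_B})$ are States/Effects Chu spaces valued in $\mathfrak{B}=\{\mathbf{Y},\mathbf{N},\bot\}$ (meet $\wedge$, product $\bullet$: $x\bullet\mathbf{Y}=x$, $x\bullet\mathbf{N}=\mathbf{N}$, $\bot\bullet\bot=\bot$), whose spaces of states admit a description in terms of pure states: the set $\mathfrak{S}^{pure}$ of completely meet-irreducible elements equals the set of maximal elements and every state is the infimum of the pure states above it. The minimal tensor product $\widetilde{S}_{AB}$ consists of the maps $\inf^{\widetilde{S}_{AB}}_{i\in I}\sigma_{i,A}\widetilde{\otimes}\sigma_{i,B}:(\mathfrak{l}_A,\mathfrak{l}_B)\mapsto\bigwedge_{i\in I}\epsilon^{\mathfrak{S}_A}_{\mathfrak{l}_A}(\sigma_{i,A})\bullet\epsilon^{\mathfrak{S}_B}_{\mathfrak{l}_B}(\sigma_{i,B})$,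 ordered pointwise. *)

theory Defs
  imports Main
begin

datatype B = Yb | Nb | Bot

definition leB :: "B \<Rightarrow> B \<Rightarrow> bool" where
  "leB x y \<longleftrightarrow> x = Bot \<or> x = y"

definition MeetB :: "B set \<Rightarrow> B" where
  "MeetB X = (if X = {Yb} then Yb else if X = {Nb} then Nb else Bot)"

text \<open>Product: x*Y = x, x*N = N, Bot*Bot = Bot (commutative, so Y*Bot = Bot, N*Bot = N).\<close>
definition prodB :: "B \<Rightarrow> B \<Rightarrow> B" where
  "prodB x y = (if y = Yb then x else if y = Nb then Nb else if x = Nb then Nb else Bot)"

definition is_glb_in :: "('x \<Rightarrow> 'x \<Rightarrow> bool) \<Rightarrow> 'x set \<Rightarrow> 'x set \<Rightarrow> 'x \<Rightarrow> bool" where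
  "is_glb_in le P X m \<longleftrightarrow> m \<in> P \<and> (\<forall>x\<in>X. le m x) \<and> (\<forall>y\<in>P. (\<forall>x\<in>X. le y x) \<longrightarrow> le y m)"

definition cmi_in :: "('x \<Rightarrow> 'x \<Rightarrow> bool) \<Rightarrow> 'x set \<Rightarrow> 'x set" where
  "cmi_in le P = {x \<in> P. \<forall>X. X \<subseteq> P \<longrightarrow> X \<noteq> {} \<longrightarrow> is_glb_in le P X x \<longrightarrow> x \<in> X}"

definition max_in :: "('x \<Rightarrow> 'x \<Rightarrow> bool) \<Rightarrow> 'x set \<Rightarrow> 'x set" where
  "max_in le P = {x \<in> P. \<forall>y\<in>P. le x y \<longrightarrow> y = x}"

text \<open>States form the poset 'a (the whole type), effects the type 'e, evaluation eps l s.\<close>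
definition SE_Chu :: "('e \<Rightarrow> 'a::order \<Rightarrow> B) \<Rightarrow> bool" where
  "SE_Chu eps \<longleftrightarrow>
     (\<forall>s s'. s \<le> s' \<longleftrightarrow> (\<forall>l. leB (eps l s) (eps l s'))) \<and>
     (\<forall>X::'a set. X \<noteq> {} \<longrightarrow> (\<exists>m. is_glb_in (\<le>) UNIV X m)) \<and>
     (\<forall>X m l. X \<noteq> {} \<longrightarrow> is_glb_in (\<le>) UNIV X m \<longrightarrow> eps l m = MeetB (eps l ` X)) \<and>
     (\<exists>u. \<forall>s. eps u s = Yb)"

definition pure_states :: "('e \<Rightarrow> 'a::order \<Rightarrow> B) \<Rightarrow> 'a set" where
  "pure_states eps = cmi_in (\<le>) UNIV"

definition pure_description :: "('e \<Rightarrow> 'a::order \<Rightarrow> B) \<Rightarrow> bool" where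
  "pure_description eps \<longleftrightarrow>
     cmi_in (\<le>) (UNIV::'a set) = max_in (\<le>) UNIV \<and>
     (\<forall>s. is_glb_in (\<le>) UNIV (pure_states eps \<inter> {s'. s \<le> s'}) s)"

definition tens :: "('e \<Rightarrow> 'a \<Rightarrow> B) \<Rightarrow> ('f \<Rightarrow> 'b \<Rightarrow> B) \<Rightarrow> 'a \<Rightarrow> 'b \<Rightarrow> ('e \<times> 'f \<Rightarrow> B)" where
  "tens epsA epsB sA sB = (\<lambda>(lA, lB). prodB (epsA lA sA) (epsB lB sB))"

text \<open>inf over a nonempty family (given as a set of pairs) of elementary tensors.\<close>
definition infTens :: "('e \<Rightarrow> 'a \<Rightarrow> B) \<Rightarrow> ('f \<Rightarrow> 'b \<Rightarrow> B) \<Rightarrow> ('a \<times> 'b) set \<Rightarrow> ('e \<times> 'f \<Rightarrow> B)" where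
  "infTens epsA epsB I = (\<lambda>(lA, lB). MeetB ((\<lambda>(sA, sB). prodB (epsA lA sA) (epsB lB sB)) ` I))"

definition minTensor :: "('e \<Rightarrow> 'a \<Rightarrow> B) \<Rightarrow> ('f \<Rightarrow> 'b \<Rightarrow> B) \<Rightarrow> ('e \<times> 'f \<Rightarrow> B) set" where
  "minTensor epsA epsB = {infTens epsA epsB I | I. I \<noteq> {}}"

definition leF :: "('x \<Rightarrow> B) \<Rightarrow> ('x \<Rightarrow> B) \<Rightarrow> bool" where
  "leF f g \<longleftrightarrow> (\<forall>x. leB (f x) (g x))"

end

theory Submission
  imports Defs
begin

lemma MeetB_Y: "X \<noteq> {} \<Longrightarrow> MeetB X = Yb \<longleftrightarrow> (\<forall>x\<in>X. x = Yb)"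
  unfolding MeetB_def by auto

lemma MeetB_N: "X \<noteq> {} \<Longrightarrow> MeetB X = Nb \<longleftrightarrow> (\<forall>x\<in>X. x = Nb)"
  unfolding MeetB_def by auto

lemma MeetB_single[simp]: "MeetB {v} = v"
  unfolding MeetB_def by (cases v) auto

lemma prodB_Y: "prodB x y = Yb \<longleftrightarrow> x = Yb \<and> y = Yb"
  unfolding prodB_def by (cases x; cases y) auto

lemma prodB_N: "prodB x y = Nb \<longleftrightarrow> x = Nb \<or> y = Nb"
  unfolding prodB_def by (cases x; cases y) auto

lemma prodB_unit[simp]: "prodB x Yb = x"
  unfolding prodB_def by auto

lemma B_cases3: "(v::B) \<noteq> Yb \<Longrightarrow> v \<noteq> Nb \<Longrightarrow> v = Bot"
  by (cases v) auto

lemma B_eq: "((p::B) = Yb \<longleftrightarrow> q = Yb) \<Longrightarrow> (p = Nb \<longleftrightarrow> q = Nb) \<Longrightarrow> p = q"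
  by (cases p; cases q) auto

lemma leB_Meet: "S \<noteq> {} \<Longrightarrow> leB v (MeetB S) \<longleftrightarrow> (\<forall>s\<in>S. leB v s)"
  unfolding leB_def MeetB_def by (cases v) auto

lemma leB_refl: "leB v v" unfolding leB_def by auto
lemma leF_refl: "leF f f" unfolding leF_def by (auto simp: leB_refl)
lemma leF_antisym: "leF f g \<Longrightarrow> leF g f \<Longrightarrow> f = g"
  unfolding leF_def leB_def by (rule ext) (metis B.distinct)

lemma leF_meet:
  assumes "F \<noteq> {}"
  shows "leF y (\<lambda>x. MeetB ((\<lambda>f. f x) ` F)) \<longleftrightarrow> (\<forall>f\<in>F. leF y f)"
  using assms unfolding leF_def by (auto simp: leB_Meet)

lemma prodB_Meet:
  assumes "X \<noteq> {}" "Y \<noteq> {}"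
  shows "prodB (MeetB X) (MeetB Y) = MeetB {prodB x y | x y. x \<in> X \<and> y \<in> Y}"
proof -
  let ?R = "{prodB x y | x y. x \<in> X \<and> y \<in> Y}"
  have ne: "?R \<noteq> {}" using assms by blast
  have r1: "MeetB ?R = Yb \<longleftrightarrow> (\<forall>x\<in>X. \<forall>y\<in>Y. prodB x y = Yb)"
    using ne by (simp add: MeetB_Y) blast
  have hY: "prodB (MeetB X) (MeetB Y) = Yb \<longleftrightarrow> MeetB ?R = Yb"
    unfolding r1 prodB_Y using assms by (simp add: MeetB_Y) blast
  have hN: "prodB (MeetB X) (MeetB Y) = Nb \<longleftrightarrow> MeetB ?R = Nb"
  proof -
    have "prodB (MeetB X) (MeetB Y) = Nb \<longleftrightarrow> (\<forall>x\<in>X. x = Nb) \<or> (\<forall>y\<in>Y. y = Nb)"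
      using assms by (simp add: prodB_N MeetB_N)
    also have "\<dots> \<longleftrightarrow> (\<forall>x\<in>X. \<forall>y\<in>Y. x = Nb \<or> y = Nb)" by blast
    also have "\<dots> \<longleftrightarrow> (\<forall>x\<in>X. \<forall>y\<in>Y. prodB x y = Nb)"
      by (simp add: prodB_N)
    also have "\<dots> \<longleftrightarrow> MeetB ?R = Nb"
      using ne by (simp add: MeetB_N) blast
    finally show ?thesis .
  qed
  show ?thesis
    by (rule B_eq[OF hY hN])
qed

definition Pu :: "('e \<Rightarrow> 'a::order \<Rightarrow> B) \<Rightarrow> 'a \<Rightarrow> 'a set" where
  "Pu eps a = pure_states eps \<inter> {s. a \<le> s}"

lemma Pu_ne:
  assumes "pure_description eps"
  shows "Pu eps a \<noteq> {}"
proof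
  assume e: "Pu eps a = {}"
  have g: "is_glb_in (\<le>) UNIV (Pu eps a) a"
    using assms unfolding pure_description_def Pu_def by blast
  hence top: "\<forall>y. y \<le> a" using e unfolding is_glb_in_def by auto
  have "a \<in> max_in (\<le>) UNIV" unfolding max_in_def using top by (auto intro: order.antisym)
  hence "a \<in> pure_states eps" using assms unfolding pure_description_def pure_states_def by auto
  hence "a \<in> Pu eps a" unfolding Pu_def by auto
  thus False using e by auto
qed

lemma eps_Pu:
  assumes "SE_Chu eps" "pure_description eps"
  shows "eps l a = MeetB (eps l ` Pu eps a)"
proof -
  have g: "is_glb_in (\<le>) UNIV (Pu eps a) a"
    using assms unfolding pure_description_def Pu_def by blast
  have h: "\<forall>X m l. X \<noteq> {} \<longrightarrow> is_glb_in (\<le>) UNIV X m \<longrightarrow> eps l m = MeetB (eps l ` X)"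
    using assms(1) unfolding SE_Chu_def by (elim conjE)
  show ?thesis using h Pu_ne[OF assms(2)] g by blast
qed

lemma pure_max:
  assumes "pure_description eps" "a \<in> pure_states eps" "a \<le> c"
  shows "c = a"
  using assms unfolding pure_description_def pure_states_def max_in_def by auto

lemma tens_K:
  assumes "SE_Chu epsA" "pure_description epsA" "SE_Chu epsB" "pure_description epsB"
  shows "tens epsA epsB a b = (\<lambda>x. MeetB ((\<lambda>f. f x) `
           ((\<lambda>(a',b'). tens epsA epsB a' b') ` (Pu epsA a \<times> Pu epsB b))))"
proof (rule ext, clarify)
  fix lA lB
  have "tens epsA epsB a b (lA, lB) = prodB (epsA lA a) (epsB lB b)" by (simp add: tens_def)
  also have "\<dots> = prodB (MeetB (epsA lA ` Pu epsA a)) (MeetB (epsB lB ` Pu epsB b))"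
    using eps_Pu assms by metis
  also have "\<dots> = MeetB {prodB x y | x y. x \<in> epsA lA ` Pu epsA a \<and> y \<in> epsB lB ` Pu epsB b}"
    using Pu_ne[OF assms(2)] Pu_ne[OF assms(4)] by (intro prodB_Meet) auto
  also have "{prodB x y | x y. x \<in> epsA lA ` Pu epsA a \<and> y \<in> epsB lB ` Pu epsB b}
     = (\<lambda>f. f (lA, lB)) ` ((\<lambda>(a',b'). tens epsA epsB a' b') ` (Pu epsA a \<times> Pu epsB b))"
    unfolding image_image by (auto simp: tens_def image_iff; blast)
  finally show "tens epsA epsB a b (lA, lB) = MeetB ((\<lambda>f. f (lA, lB)) `
           ((\<lambda>(a',b'). tens epsA epsB a' b') ` (Pu epsA a \<times> Pu epsB b)))" .
qed

lemma infTens_meet: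
  "infTens epsA epsB J = (\<lambda>x. MeetB ((\<lambda>f. f x) ` ((\<lambda>(a,b). tens epsA epsB a b) ` J)))"
  by (rule ext, clarify) (simp add: infTens_def tens_def image_image case_prod_unfold)


lemma F1:
  assumes "SE_Chu epsA" "pure_description epsA" "SE_Chu epsB" "pure_description epsB"
    and "\<sigma> \<in> minTensor epsA epsB"
  shows "\<exists>T. T \<subseteq> {tens epsA epsB sA sB | sA sB. sA \<in> pure_states epsA \<and> sB \<in> pure_states epsB}
          \<and> T \<noteq> {} \<and> (\<forall>y. leF y \<sigma> \<longleftrightarrow> (\<forall>t\<in>T. leF y t))"
proof -
  obtain J where J: "J \<noteq> {}" "\<sigma> = infTens epsA epsB J"
    using assms(5) unfolding minTensor_def by blast
  define T where "T = (\<lambda>(a',b'). tens epsA epsB a' b') ` (\<Union>(a,b)\<in>J. Pu epsA a \<times> Pu epsB b)"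
  have sub: "T \<subseteq> {tens epsA epsB sA sB | sA sB. sA \<in> pure_states epsA \<and> sB \<in> pure_states epsB}"
    unfolding T_def Pu_def by auto
  have ne: "T \<noteq> {}"
  proof -
    obtain a b where ab: "(a,b) \<in> J" using J by auto
    obtain a' where "a' \<in> Pu epsA a" using Pu_ne[OF assms(2)] by blast
    moreover obtain b' where "b' \<in> Pu epsB b" using Pu_ne[OF assms(4)] by blast
    ultimately show ?thesis unfolding T_def using ab by blast
  qed
  have eq: "leF y \<sigma> \<longleftrightarrow> (\<forall>t\<in>T. leF y t)" for y
  proof -
    have "leF y \<sigma> \<longleftrightarrow> (\<forall>f\<in>(\<lambda>(a,b). tens epsA epsB a b) ` J. leF y f)"
      unfolding J(2) infTens_meet using J(1) by (intro leF_meet) auto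
    also have "\<dots> \<longleftrightarrow> (\<forall>(a,b)\<in>J. leF y (tens epsA epsB a b))" by (simp add: case_prod_unfold)
    also have "\<dots> \<longleftrightarrow> (\<forall>(a,b)\<in>J. \<forall>f\<in>(\<lambda>(a',b'). tens epsA epsB a' b') ` (Pu epsA a \<times> Pu epsB b). leF y f)"
    proof -
      have h: "leF y (tens epsA epsB a b) \<longleftrightarrow> (\<forall>f\<in>(\<lambda>(a',b'). tens epsA epsB a' b') ` (Pu epsA a \<times> Pu epsB b). leF y f)" for a b
        apply (subst tens_K[OF assms(1-4)])
        apply (rule leF_meet)
        using Pu_ne[OF assms(2)] Pu_ne[OF assms(4)] by auto
      show ?thesis
      proof (rule ball_cong[OF refl])
        fix p assume "p \<in> J"
        obtain a b where p: "p = (a,b)" by (cases p)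
        show "(case p of (a,b) \<Rightarrow> leF y (tens epsA epsB a b)) = (case p of (a,b) \<Rightarrow> (\<forall>f\<in>(\<lambda>(a',b'). tens epsA epsB a' b') ` (Pu epsA a \<times> Pu epsB b). leF y f))"
          unfolding p case_prod_conv by (rule h)
      qed
    qed
    also have "\<dots> \<longleftrightarrow> (\<forall>t\<in>T. leF y t)" unfolding T_def by (simp add: case_prod_unfold)
    finally show ?thesis .
  qed
  show ?thesis
    apply (rule exI[of _ T])
    using sub ne eq by simp
qed

lemma F2:
  assumes "SE_Chu epsA" "pure_description epsA" "SE_Chu epsB" "pure_description epsB"
    and "a \<in> pure_states epsA" "b \<in> pure_states epsB"
  shows "tens epsA epsB a b \<in> max_in leF (minTensor epsA epsB)"
proof -
  have single: "infTens epsA epsB {(a,b)} = tens epsA epsB a b"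
    by (rule ext, clarify) (simp add: infTens_def tens_def)
  have mem: "tens epsA epsB a b \<in> minTensor epsA epsB"
    unfolding minTensor_def by (rule CollectI, rule exI[of _ "{(a,b)}"]) (simp add: single)
  have "\<exists>u. \<forall>s. epsA u s = Yb" using assms(1) unfolding SE_Chu_def by (elim conjE)
  then obtain uA where uA: "\<forall>s. epsA uA s = Yb" by blast
  have "\<exists>u. \<forall>s. epsB u s = Yb" using assms(3) unfolding SE_Chu_def by (elim conjE)
  then obtain uB where uB: "\<forall>s. epsB uB s = Yb" by blast
  have ordA: "\<forall>s s'. s \<le> s' \<longleftrightarrow> (\<forall>l. leB (epsA l s) (epsA l s'))"
    using assms(1) unfolding SE_Chu_def by (elim conjE)
  have ordB: "\<forall>s s'. s \<le> s' \<longleftrightarrow> (\<forall>l. leB (epsB l s) (epsB l s'))"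
    using assms(3) unfolding SE_Chu_def by (elim conjE)
  have prod_comm_Y: "prodB Yb x = x" for x unfolding prodB_def by (cases x) auto
  have "\<sigma> = tens epsA epsB a b" if s: "\<sigma> \<in> minTensor epsA epsB" "leF (tens epsA epsB a b) \<sigma>" for \<sigma>
  proof -
    obtain J where J: "J \<noteq> {}" "\<sigma> = infTens epsA epsB J"
      using s(1) unfolding minTensor_def by blast
    have allJ: "p = (a,b)" if p: "p \<in> J" for p
    proof -
      obtain c d where cd: "p = (c,d)" by (cases p)
      have "a \<le> c"
      proof -
        have "leB (epsA l a) (epsA l c)" for l
        proof -
          have "leB (tens epsA epsB a b (l,uB)) (\<sigma> (l,uB))" using s(2) unfolding leF_def by blast
          hence "leB (epsA l a) (MeetB ((\<lambda>(sA, sB). epsA l sA) ` J))"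
            unfolding J(2) by (simp add: tens_def infTens_def uB case_prod_unfold)
          thus ?thesis using J(1) p cd by (subst (asm) leB_Meet) auto
        qed
        thus ?thesis using ordA by blast
      qed
      hence "c = a" using pure_max[OF assms(2,5)] by blast
      moreover have "b \<le> d"
      proof -
        have "leB (epsB l b) (epsB l d)" for l
        proof -
          have "leB (tens epsA epsB a b (uA,l)) (\<sigma> (uA,l))" using s(2) unfolding leF_def by blast
          hence "leB (epsB l b) (MeetB ((\<lambda>(sA, sB). epsB l sB) ` J))"
            unfolding J(2) by (simp add: tens_def infTens_def uA case_prod_unfold prod_comm_Y)
          thus ?thesis using J(1) p cd by (subst (asm) leB_Meet) auto
        qed
        thus ?thesis using ordB by blast
      qed
      hence "d = b" using pure_max[OF assms(4,6)] by blast
      ultimately show ?thesis using cd by simp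
    qed
    have "J = {(a,b)}" using J(1) allJ by blast
    thus ?thesis using J(2) single by simp
  qed
  thus ?thesis using mem unfolding max_in_def by blast
qed

theorem mainTheorem13:
  fixes epsA :: "'eA \<Rightarrow> 'sA::order \<Rightarrow> B" and epsB :: "'eB \<Rightarrow> 'sB::order \<Rightarrow> B"
  assumes "SE_Chu epsA" and "pure_description epsA"
      and "SE_Chu epsB" and "pure_description epsB"
  shows "(\<forall>\<sigma>\<in>minTensor epsA epsB.
            is_glb_in leF (minTensor epsA epsB)
              (cmi_in leF (minTensor epsA epsB) \<inter> {\<sigma>'\<in>minTensor epsA epsB. leF \<sigma> \<sigma>'}) \<sigma>)
       \<and> cmi_in leF (minTensor epsA epsB)
           = {tens epsA epsB sA sB | sA sB. sA \<in> pure_states epsA \<and> sB \<in> pure_states epsB}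
       \<and> max_in leF (minTensor epsA epsB)
           = {tens epsA epsB sA sB | sA sB. sA \<in> pure_states epsA \<and> sB \<in> pure_states epsB}"
proof -
  let ?P = "minTensor epsA epsB"
  let ?PT = "{tens epsA epsB sA sB | sA sB. sA \<in> pure_states epsA \<and> sB \<in> pure_states epsB}"
  have PTmax: "?PT \<subseteq> max_in leF ?P" using F2[OF assms] by blast
  have PTP: "?PT \<subseteq> ?P" using PTmax unfolding max_in_def by blast
  have f1: "\<And>\<sigma>. \<sigma> \<in> ?P \<Longrightarrow> \<exists>T. T \<subseteq> ?PT \<and> T \<noteq> {} \<and> (\<forall>y. leF y \<sigma> \<longleftrightarrow> (\<forall>t\<in>T. leF y t))"
    using F1[OF assms] by blast
  have maxPT: "max_in leF ?P \<subseteq> ?PT"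
  proof
    fix \<sigma> assume m: "\<sigma> \<in> max_in leF ?P"
    hence sP: "\<sigma> \<in> ?P" unfolding max_in_def by blast
    obtain T where T: "T \<subseteq> ?PT" "T \<noteq> {}" "\<forall>y. leF y \<sigma> \<longleftrightarrow> (\<forall>t\<in>T. leF y t)"
      using f1[OF sP] by blast
    obtain t where t: "t \<in> T" using T(2) by blast
    have "leF \<sigma> t" using T(3) t leF_refl by blast
    moreover have "t \<in> ?P" using t T(1) PTP by blast
    ultimately have "t = \<sigma>" using m unfolding max_in_def by blast
    thus "\<sigma> \<in> ?PT" using t T(1) by blast
  qed
  have PTcmi: "?PT \<subseteq> cmi_in leF ?P"
  proof
    fix t assume tPT: "t \<in> ?PT"
    have tmax: "t \<in> max_in leF ?P" using tPT PTmax by blast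
    show "t \<in> cmi_in leF ?P"
      unfolding cmi_in_def
    proof (intro CollectI conjI allI impI)
      show "t \<in> ?P" using tPT PTP by blast
      fix X assume X: "X \<subseteq> ?P" "X \<noteq> {}" "is_glb_in leF ?P X t"
      obtain \<sigma> where s: "\<sigma> \<in> X" using X(2) by blast
      have "leF t \<sigma>" using X(3) s unfolding is_glb_in_def by blast
      hence "\<sigma> = t" using tmax s X(1) unfolding max_in_def by blast
      thus "t \<in> X" using s by simp
    qed
  qed
  have cmiPT: "cmi_in leF ?P \<subseteq> ?PT"
  proof
    fix \<sigma> assume c: "\<sigma> \<in> cmi_in leF ?P"
    hence sP: "\<sigma> \<in> ?P" unfolding cmi_in_def by blast
    obtain T where T: "T \<subseteq> ?PT" "T \<noteq> {}" "\<forall>y. leF y \<sigma> \<longleftrightarrow> (\<forall>t\<in>T. leF y t)"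
      using f1[OF sP] by blast
    have TP: "T \<subseteq> ?P" using T(1) PTP by blast
    have "is_glb_in leF ?P T \<sigma>"
      unfolding is_glb_in_def using sP T(3) leF_refl by blast
    hence "\<sigma> \<in> T" using c TP T(2) unfolding cmi_in_def by blast
    thus "\<sigma> \<in> ?PT" using T(1) by blast
  qed
  have cmi_eq: "cmi_in leF ?P = ?PT" using PTcmi cmiPT by blast
  have max_eq: "max_in leF ?P = ?PT" using PTmax maxPT by blast
  have glb: "is_glb_in leF ?P (cmi_in leF ?P \<inter> {\<sigma>'\<in>?P. leF \<sigma> \<sigma>'}) \<sigma>" if sP: "\<sigma> \<in> ?P" for \<sigma>
  proof -
    obtain T where T: "T \<subseteq> ?PT" "T \<noteq> {}" "\<forall>y. leF y \<sigma> \<longleftrightarrow> (\<forall>t\<in>T. leF y t)"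
      using f1[OF sP] by blast
    have TS: "T \<subseteq> cmi_in leF ?P \<inter> {\<sigma>'\<in>?P. leF \<sigma> \<sigma>'}"
      using T(1) T(3) PTP leF_refl cmi_eq by blast
    show ?thesis
      unfolding is_glb_in_def
    proof (intro conjI ballI impI)
      show "\<sigma> \<in> ?P" by (rule sP)
      fix x assume "x \<in> cmi_in leF ?P \<inter> {\<sigma>'\<in>?P. leF \<sigma> \<sigma>'}"
      thus "leF \<sigma> x" by blast
    next
      fix y assume "y \<in> ?P" "\<forall>x\<in>cmi_in leF ?P \<inter> {\<sigma>'\<in>?P. leF \<sigma> \<sigma>'}. leF y x"
      hence "\<forall>t\<in>T. leF y t" using TS by blast
      thus "leF y \<sigma>" using T(3) by blast
    qed
  qed
  show ?thesis using glb cmi_eq max_eq by blast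
qed

end
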